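(* Let $\chi$ be a Dirichlet character mod $q$ induced by the primitive Dirichlet character $\psi$ mod $q_0$. Then for each $n\ge1$, $$\sum_{d\mid n}\tau(d,\chi)\,\mu(\tfrac nd)\,\overline{\psi(\tfrac nd)}=\begin{cases}n\,\tau(\psi)\,\mu(\frac{q}{nq_0})\,\psi(\frac{q}{nq_0}),& n\mid\frac q{q_0},\\ 0,& n\nmid\frac q{q_0}.\end{cases}$$
   Context: A Dirichlet character mod $m$ is a completely multiplicative $m$-periodic function with $\chi(n)\ne0$ iff $\gcd(n,m)=1$. $\psi$ mod $q_0$ induces $\chi$ mod $q$ if $q_0\mid q$ and $\chi=\psi\chi_q$ with $\chi_q$ the principal character mod $q$; primitive means not induced by a character of modulus a proper divisor. $\mu$ is the Möbius function. For a character $\chi$ mod $m$, $\tau(n,\chi)=\sum_{k=1}^m\chi(k)e^{2\pi ikn/m}$ and $\tau(\chi)=\tau(1,\chi)$. *)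

theory Defs
  imports "HOL-Analysis.Analysis" "HOL-Computational_Algebra.Squarefree"
begin

definition dchar :: "nat \<Rightarrow> (nat \<Rightarrow> complex) \<Rightarrow> bool" where
  "dchar m chi \<longleftrightarrow> m > 0 \<and>
     (\<forall>a b. chi (a * b) = chi a * chi b) \<and>
     (\<forall>n. chi (n + m) = chi n) \<and>
     (\<forall>n. chi n \<noteq> 0 \<longleftrightarrow> coprime n m)"

definition principal_char :: "nat \<Rightarrow> nat \<Rightarrow> complex" where
  "principal_char q n = (if coprime n q then 1 else 0)"

definition induces :: "(nat \<Rightarrow> complex) \<Rightarrow> nat \<Rightarrow> (nat \<Rightarrow> complex) \<Rightarrow> nat \<Rightarrow> bool" where
  "induces psi q0 chi q \<longleftrightarrow> dchar q0 psi \<and> dchar q chi \<and> q0 dvd q \<and>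
     (\<forall>n. chi n = psi n * principal_char q n)"

definition primitive :: "nat \<Rightarrow> (nat \<Rightarrow> complex) \<Rightarrow> bool" where
  "primitive m chi \<longleftrightarrow> dchar m chi \<and>
     \<not> (\<exists>d phi. d dvd m \<and> d \<noteq> m \<and> induces phi d chi m)"

definition moebius :: "nat \<Rightarrow> int" where
  "moebius n = (if squarefree n then (-1) ^ card (prime_factors n) else 0)"

definition gauss_sum :: "nat \<Rightarrow> (nat \<Rightarrow> complex) \<Rightarrow> nat \<Rightarrow> complex" where
  "gauss_sum n chi m = (\<Sum>k=1..m. chi k * exp (2 * pi * \<i> * of_nat k * of_nat n / of_nat m))"

end

theory Submission
  imports Defs "HOL-Number_Theory.Cong"
begin

definition ex :: "nat \<Rightarrow> nat \<Rightarrow> complex" where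
  "ex m x = exp (2 * pi * \<i> * of_nat x / of_nat m)"

lemma gauss_ex: "gauss_sum n chi m = (\<Sum>k=1..m. chi k * ex m (k * n))"
  unfolding gauss_sum_def ex_def by (simp add: mult.assoc)

lemma ex_add: "ex m (a + b) = ex m a * ex m b"
  unfolding ex_def by (simp add: add_divide_distrib distrib_left exp_add)

lemma ex_mult_m: "m > 0 \<Longrightarrow> ex m (m * t) = 1"
proof -
  assume "m > 0"
  have "2 * pi * \<i> * of_nat (m * t) / of_nat m = of_nat t * (2 * pi * \<i>)"
    using \<open>m>0\<close> by (simp add: field_simps)
  then show ?thesis unfolding ex_def by (simp add: exp_of_nat_mult)
qed

lemma ex_mod: "m > 0 \<Longrightarrow> ex m (x mod m) = ex m x"
proof -
  assume m: "m > 0"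
  have "ex m x = ex m (x mod m + m * (x div m))" by (simp add: mod_mult_div_eq)
  also have "\<dots> = ex m (x mod m)" by (subst ex_add) (simp add: ex_mult_m m)
  finally show ?thesis by simp
qed

lemma ex_cong: "m > 0 \<Longrightarrow> [a = b] (mod m) \<Longrightarrow> ex m a = ex m b"
  by (metis cong_def ex_mod)

lemma ex_scale: "e > 0 \<Longrightarrow> ex (e * m) (e * x) = ex m x"
  unfolding ex_def by (simp add: field_simps)

lemma ex_eq1: assumes "m > 0" shows "ex m x = 1 \<longleftrightarrow> m dvd x"
proof
  assume "m dvd x" then show "ex m x = 1" using ex_mult_m assms by auto
next
  assume "ex m x = 1"
  then obtain k :: int where k: "2 * pi * real x / real m = of_int (2 * k) * pi"
    unfolding ex_def exp_eq_1 by auto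
  have "real x / real m = (2 * pi * real x / real m) / (2*pi)" by simp
  also have "\<dots> = of_int k" unfolding k by simp
  finally have "real x / real m = of_int k" .
  then have "real x = real m * of_int k" using assms by (simp add: field_simps)
  then have "int x = int m * k" by (metis of_int_eq_iff of_int_mult of_int_of_nat_eq)
  then show "m dvd x" by (metis dvd_triv_left int_dvd_int_iff)
qed

lemma ex_power: "ex m x ^ t = ex m (x * t)"
proof (induction t)
  case 0 then show ?case by (simp add: ex_def)
next
  case (Suc t) then show ?case by (simp add: ex_add[symmetric])
qed


lemma dchar_add_mult: "dchar m chi \<Longrightarrow> chi (a + k * m) = chi a"
proof (induction k)
  case (Suc k)
  have "chi (a + Suc k * m) = chi ((a + k * m) + m)" by (simp add: algebra_simps)
  also have "\<dots> = chi (a + k * m)" using Suc.prems unfolding dchar_def by blast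
  finally show ?case using Suc by simp
qed simp

lemma dchar_mod: "dchar m chi \<Longrightarrow> chi (n mod m) = chi n"
  by (metis dchar_add_mult mod_div_mult_eq)

lemma dchar_cong: "dchar m chi \<Longrightarrow> [a = b] (mod m) \<Longrightarrow> chi a = chi b"
  by (metis cong_def dchar_mod)

lemma dchar_mult: "dchar m chi \<Longrightarrow> chi (a * b) = chi a * chi b"
  unfolding dchar_def by blast

lemma dchar_nz: "dchar m chi \<Longrightarrow> chi n \<noteq> 0 \<longleftrightarrow> coprime n m"
  unfolding dchar_def by blast

lemma dchar_pos: "dchar m chi \<Longrightarrow> m > 0"
  unfolding dchar_def by blast

lemma dchar_one: "dchar m chi \<Longrightarrow> chi 1 = 1"
proof -
  assume d: "dchar m chi"
  have "chi 1 = chi 1 * chi 1" using dchar_mult[OF d, of 1 1] by simp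
  moreover have "chi 1 \<noteq> 0" using dchar_nz[OF d] by simp
  ultimately show ?thesis by (metis mult_cancel_right1)
qed

lemma dchar_pow: "dchar m chi \<Longrightarrow> chi (n ^ k) = chi n ^ k"
  by (induction k) (simp_all add: dchar_one[simplified] dchar_mult)

lemma dchar_norm: assumes d: "dchar m chi" and c: "coprime n m" shows "cnj (chi n) * chi n = 1"
proof -
  have m: "m > 0" using dchar_pos[OF d] .
  let ?f = "\<lambda>k. n ^ k mod m"
  have "?f ` {..m} \<subseteq> {..<m}" using m by auto
  then have "card (?f ` {..m}) \<le> m" by (metis card_lessThan card_mono finite_lessThan)
  then have "\<not> inj_on ?f {..m}" using card_image by fastforce
  then obtain i j where ij: "i \<le> m" "j \<le> m" "i \<noteq> j" "?f i = ?f j" unfolding inj_on_def by auto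
  have key: "chi n ^ (b - a) = 1" if "a < b" "?f a = ?f b" for a b
  proof -
    have "chi n ^ a = chi n ^ b" using that dchar_mod[OF d] dchar_pow[OF d] by metis
    also have "\<dots> = chi n ^ a * chi n ^ (b - a)" using that by (simp add: power_add[symmetric])
    moreover have "chi n \<noteq> 0" using dchar_nz[OF d] c by blast
    ultimately show ?thesis by simp
  qed
  obtain t where t: "t > 0" "chi n ^ t = 1"
  proof (cases "i < j")
    case True then show ?thesis using key[of i j] ij that[of "j - i"] by simp
  next
    case False then have "j < i" using ij by simp
    then show ?thesis using key[of j i] ij that[of "i - j"] by simp
  qed
  then have "norm (chi n) = 1" using power_eq_1_iff[of "chi n" t] by simp
  then have "of_real ((norm (chi n))\<^sup>2) = (1::complex)" by simp
  then show ?thesis using complex_norm_square[of "chi n"] by (simp add: mult.commute)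
qed


lemma sum_shift_period:
  fixes f :: "nat \<Rightarrow> 'a::comm_monoid_add"
  assumes "f m = f 0" shows "(\<Sum>k=1..m. f k) = (\<Sum>k<m. f k)"
proof (cases "m = 0")
  case True then show ?thesis by simp
next
  case False
  have "{1..m} = insert m {1..<m}" using False by auto
  moreover have "{..<m} = insert 0 {1..<m}" using False by auto
  ultimately show ?thesis using assms by simp
qed

lemma sum_perm:
  fixes f :: "nat \<Rightarrow> 'a::comm_monoid_add"
  assumes m: "m > 0" and c: "coprime c m" and per: "\<And>k. f (k mod m) = f k"
  shows "(\<Sum>k<m. f (c * k)) = (\<Sum>k<m. f k)"
proof -
  let ?g = "\<lambda>k. c * k mod m"
  have inj: "inj_on ?g {..<m}"
  proof (rule inj_onI)
    fix x y assume "x \<in> {..<m}" "y \<in> {..<m}" "?g x = ?g y"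
    then have "[c * x = c * y] (mod m)" by (simp add: cong_def)
    then have "[x = y] (mod m)" using cong_mult_lcancel_nat[OF c] by simp
    then show "x = y" using \<open>x \<in> {..<m}\<close> \<open>y \<in> {..<m}\<close> by (simp add: cong_def)
  qed
  have im: "?g ` {..<m} = {..<m}"
    by (rule endo_inj_surj[OF _ _ inj]) (use m in auto)
  have "(\<Sum>k<m. f (c * k)) = (\<Sum>k<m. f (?g k))" using per by simp
  also have "\<dots> = sum f (?g ` {..<m})" using sum.reindex[OF inj, of f] by simp
  also have "\<dots> = (\<Sum>k<m. f k)" using im by simp
  finally show ?thesis .
qed

lemma sum_group:
  fixes g :: "nat \<Rightarrow> 'a::comm_monoid_add"
  shows "(\<Sum>j\<in>{..<q * s}. g j) = (\<Sum>t<s. \<Sum>a<q. g (q * t + a))"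
proof (induction s)
  case 0 then show ?case by simp
next
  case (Suc s)
  have "(\<Sum>j\<in>{..<q * Suc s}. g j) = (\<Sum>j\<in>{0..<q * s}. g j) + (\<Sum>j\<in>{q * s..<q * s+q}. g j)"
    by (simp add: sum.atLeastLessThan_concat atLeast0LessThan[symmetric] add.commute)
  also have "(\<Sum>j\<in>{q * s..<q * s+q}. g j) = (\<Sum>a<q. g (q * s + a))"
    using sum.shift_bounds_nat_ivl[of g 0 "q * s" q] by (simp add: atLeast0LessThan add.commute)
  finally show ?case using Suc by (simp add: atLeast0LessThan)
qed


lemma moebius_sq: assumes "prime (p::nat)" "p^2 dvd d" shows "moebius d = 0"
proof -
  have "\<not> squarefree d" using assms(2) not_squarefreeI[of p d] prime_gt_1_nat[OF assms(1)] by auto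
  then show ?thesis unfolding moebius_def by simp
qed

lemma moebius_mult_prime:
  assumes p: "prime (p::nat)" and nd: "\<not> p dvd d" and d: "d > 0"
  shows "moebius (p * d) = - moebius d"
proof -
  have cop: "coprime p d" using prime_imp_coprime[OF p nd] .
  have sq: "squarefree (p * d) \<longleftrightarrow> squarefree d"
    using squarefree_mult_coprime[OF cop] squarefree_prime[OF p] squarefree_multD by blast
  have pf: "prime_factors (p * d) = insert p (prime_factors d)"
    using prime_factors_product[of p d] prime_prime_factors[OF p] p d by auto
  have "p \<notin> prime_factors d" using nd by auto
  then have "card (prime_factors (p * d)) = Suc (card (prime_factors d))" using pf by simp
  then show ?thesis unfolding moebius_def using sq by simp
qed

lemma msum_int: assumes "m > 0" shows "(\<Sum>d | d dvd m. moebius d) = (if m = 1 then 1 else 0)"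
proof (cases "m = 1")
  case True
  then have "{d. d dvd m} = {1}" by auto
  then show ?thesis using True by (simp add: moebius_def)
next
  case False
  obtain p where p: "prime p" "p dvd m" using prime_factor_nat[OF False] by blast
  define D where "D = {d. d dvd m}"
  define A where "A = {d \<in> D. \<not> p dvd d}"
  define B where "B = {d \<in> D. p dvd d}"
  have finD: "finite D" unfolding D_def using assms by simp
  have fA: "finite A" "finite B" unfolding A_def B_def using finD by auto
  have DAB: "D = A \<union> B" "A \<inter> B = {}" unfolding A_def B_def by auto
  have sumD: "sum moebius D = sum moebius A + sum moebius B"
    using sum.union_disjoint[OF fA DAB(2)] DAB(1) by simp
  have imB: "(\<lambda>d. p * d) ` A \<subseteq> B"
  proof
    fix x assume "x \<in> (\<lambda>d. p * d) ` A"
    then obtain d where d: "d \<in> A" "x = p * d" by auto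
    have "p * d dvd m"
      using divides_mult[OF p(2), of d] d prime_imp_coprime[OF p(1)] unfolding A_def D_def by auto
    then show "x \<in> B" unfolding B_def D_def using d by auto
  qed
  have "sum moebius B = sum moebius ((\<lambda>d. p * d) ` A)"
  proof (rule sum.mono_neutral_right[OF fA(2) imB])
    show "\<forall>i\<in>B - (\<lambda>d. p * d) ` A. moebius i = 0"
    proof
      fix x assume x: "x \<in> B - (\<lambda>d. p * d) ` A"
      then obtain e where e: "x = p * e" unfolding B_def by auto
      have "x dvd m" using x unfolding B_def D_def by auto
      then have "e dvd m" using e dvd_mult_right by blast
      then have "p dvd e" using x e unfolding A_def D_def by auto
      then have "p^2 dvd x" using e by (simp add: power2_eq_square)
      then show "moebius x = 0" using moebius_sq[OF p(1)] by simp
    qed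
  qed
  also have "\<dots> = sum (\<lambda>d. moebius (p * d)) A"
    using sum.reindex[of "\<lambda>d. p * d" A moebius] p(1) by (simp add: inj_on_def prime_gt_0_nat)
  also have "\<dots> = sum (\<lambda>d. - moebius d) A"
  proof (rule sum.cong[OF refl])
    fix d assume "d \<in> A"
    then have "\<not> p dvd d" "d > 0" unfolding A_def D_def using assms by (auto intro: Nat.gr0I)
    then show "moebius (p * d) = - moebius d" using moebius_mult_prime[OF p(1)] by simp
  qed
  finally show ?thesis using sumD False unfolding D_def by (simp add: sum_negf)
qed

lemma msum: assumes "m > 0"
  shows "(\<Sum>d | d dvd m. (of_int (moebius d) :: 'a::comm_ring_1)) = (if m = 1 then 1 else 0)"
  using arg_cong[OF msum_int[OF assms], of "of_int :: int \<Rightarrow> 'a"] by simp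


lemma common_prime:
  assumes "\<not> coprime (a::nat) b" obtains p where "prime p" "p dvd a" "p dvd b"
proof -
  have "gcd a b \<noteq> 1" using assms by (simp add: coprime_iff_gcd_eq_1)
  then obtain p where "prime p" "p dvd gcd a b" using prime_factor_nat by blast
  then show ?thesis using that by auto
qed

lemma lift_exists:
  fixes a q1 m :: nat
  assumes m: "m > 0" and ca: "coprime a q1"
  shows "\<exists>b. [b = a] (mod q1) \<and> coprime b m"
proof -
  define t where "t = \<Prod>{p \<in> prime_factors m. \<not> p dvd a}"
  have fin: "finite {p \<in> prime_factors m. \<not> p dvd a}" by simp
  have "coprime (a + q1 * t) m"
  proof (rule ccontr)
    assume "\<not> coprime (a + q1 * t) m"
    then obtain p where p: "prime p" "p dvd a + q1 * t" "p dvd m" by (rule common_prime)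
    show False
    proof (cases "p dvd a")
      case True
      have "\<not> p dvd q1"
      proof
        assume "p dvd q1"
        then show False using ca p(1) True by (metis coprime_common_divisor not_prime_unit)
      qed
      moreover have "\<not> p dvd t"
      proof
        assume "p dvd t"
        then obtain x where x: "x \<in> prime_factors m" "\<not> x dvd a" "p dvd x"
          unfolding t_def using prime_dvd_prod_iff[OF fin p(1), of id] by auto
        then have "p = x" using primes_dvd_imp_eq[OF p(1)] by auto
        then show False using x True by simp
      qed
      moreover have "p dvd q1 * t" using p(2) True by (simp add: dvd_add_right_iff)
      ultimately show False using prime_dvd_mult_iff[OF p(1)] by blast
    next
      case False
      have "p \<in> {p \<in> prime_factors m. \<not> p dvd a}" using p False m by (auto simp: in_prime_factors_iff)
      then have "p dvd t" unfolding t_def using fin by (metis dvd_prodI id_apply prod.cong)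
      then have "p dvd q1 * t" by simp
      then have "p dvd a" using p(2) by (simp add: dvd_add_left_iff)
      then show False using False by simp
    qed
  qed
  moreover have "[a + q1 * t = a] (mod q1)" by (simp add: cong_def)
  ultimately show ?thesis by blast
qed

lemma coprime_dvd_mod: "coprime (n::nat) m \<Longrightarrow> q1 dvd m \<Longrightarrow> coprime n q1"
  by (metis coprime_mult_right_iff dvd_def)

lemma induced_exists:
  assumes d: "dchar m psi" and q1: "q1 dvd m"
    and H: "\<And>x y. coprime x m \<Longrightarrow> coprime y m \<Longrightarrow> [x = y] (mod q1) \<Longrightarrow> psi x = psi y"
  shows "\<exists>phi. induces phi q1 psi m"
proof -
  have m: "m > 0" using dchar_pos[OF d] .
  have q1p: "q1 > 0" using q1 m by (metis dvd_0_left_iff gr0I less_numeral_extra(3))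
  define lift where "lift a = (SOME b. [b = a] (mod q1) \<and> coprime b m)" for a
  have lp: "[lift a = a] (mod q1) \<and> coprime (lift a) m" if "coprime a q1" for a
    unfolding lift_def using someI_ex[OF lift_exists[OF m that]] .
  define phi where "phi a = (if coprime a q1 then psi (lift a) else 0)" for a
  have pm: "phi (a * b) = phi a * phi b" for a b
  proof (cases "coprime a q1 \<and> coprime b q1")
    case True
    then have ab: "coprime (a * b) q1" by simp
    have "[lift a * lift b = a * b] (mod q1)" using lp True by (blast intro: cong_mult)
    then have "[lift (a * b) = lift a * lift b] (mod q1)"
      using lp[OF ab] by (meson cong_sym cong_trans)
    moreover have "coprime (lift a * lift b) m" using lp True by simp
    ultimately have "psi (lift (a * b)) = psi (lift a * lift b)" using H lp[OF ab] by blast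
    then show ?thesis unfolding phi_def using True ab dchar_mult[OF d] by simp
  next
    case False
    then show ?thesis unfolding phi_def by auto
  qed
  have pp: "phi (a + q1) = phi a" for a
  proof (cases "coprime a q1")
    case True
    then have c2: "coprime (a + q1) q1" by (simp add: coprime_iff_gcd_eq_1)
    have "[lift (a + q1) = a + q1] (mod q1)" using lp[OF c2] by simp
    moreover have "[a + q1 = a] (mod q1)" by (simp add: cong_def)
    ultimately have "[lift (a + q1) = lift a] (mod q1)" using lp[OF True] by (meson cong_sym cong_trans)
    then show ?thesis unfolding phi_def using True c2 H lp by simp
  next
    case False then show ?thesis unfolding phi_def by (simp add: coprime_iff_gcd_eq_1)
  qed
  have pn: "phi a \<noteq> 0 \<longleftrightarrow> coprime a q1" for a
    unfolding phi_def using lp dchar_nz[OF d] by auto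
  have dp: "dchar q1 phi" unfolding dchar_def using q1p pm pp pn by blast
  have "psi n = phi n * principal_char m n" for n
  proof (cases "coprime n m")
    case True
    then have c1: "coprime n q1" using coprime_dvd_mod q1 by blast
    then have "psi (lift n) = psi n" using H lp True by blast
    then show ?thesis unfolding phi_def principal_char_def using True c1 by simp
  next
    case False then show ?thesis using dchar_nz[OF d] unfolding principal_char_def by auto
  qed
  then show ?thesis unfolding induces_def using dp d q1 by blast
qed


lemma gper: assumes d: "dchar m psi"
  shows "psi (k mod m) * ex m (k mod m * n) = psi k * ex m (k * n)"
proof -
  have m: "m > 0" using dchar_pos[OF d] .
  have "[k mod m * n = k * n] (mod m)" by (simp add: cong_def mod_mult_left_eq)
  then show ?thesis using ex_cong[OF m] dchar_mod[OF d] by simp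
qed

lemma gauss_lt: assumes d: "dchar m psi"
  shows "gauss_sum n psi m = (\<Sum>k<m. psi k * ex m (k * n))"
proof -
  have "psi m * ex m (m * n) = psi 0 * ex m (0 * n)"
    using gper[OF d, of m n] by simp
  then show ?thesis unfolding gauss_ex by (rule sum_shift_period)
qed

lemma gauss_coprime: assumes d: "dchar m psi" and c: "coprime n m"
  shows "gauss_sum n psi m = cnj (psi n) * gauss_sum 1 psi m"
proof -
  have m: "m > 0" using dchar_pos[OF d] .
  define F where "F k = psi k * ex m (k * 1)" for k
  have per: "F (k mod m) = F k" for k unfolding F_def using gper[OF d] .
  have "psi n * gauss_sum n psi m = (\<Sum>k<m. psi n * (psi k * ex m (k * n)))"
    unfolding gauss_lt[OF d] by (simp add: sum_distrib_left)
  also have "\<dots> = (\<Sum>k<m. F (n * k))"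
  proof (rule sum.cong[OF refl])
    fix k
    have "F (n * k) = psi n * psi k * ex m (n * k * 1)" unfolding F_def dchar_mult[OF d] ..
    also have "\<dots> = psi n * (psi k * ex m (k * n))" by (simp add: mult.commute mult.assoc)
    finally show "psi n * (psi k * ex m (k * n)) = F (n * k)" by simp
  qed
  also have "\<dots> = (\<Sum>k<m. F k)" by (rule sum_perm[OF m c]) (rule per)
  also have "\<dots> = gauss_sum 1 psi m" unfolding gauss_lt[OF d] F_def by simp
  finally have e: "psi n * gauss_sum n psi m = gauss_sum 1 psi m" .
  have "gauss_sum n psi m = (cnj (psi n) * psi n) * gauss_sum n psi m"
    using dchar_norm[OF d c] by simp
  also have "\<dots> = cnj (psi n) * gauss_sum 1 psi m" using e by (simp add: mult.assoc)
  finally show ?thesis .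
qed

lemma gauss_vanish:
  assumes d: "dchar m psi" and c: "coprime c m" and pc: "psi c \<noteq> 1"
    and cg: "\<And>k. [c * k * n = k * n] (mod m)"
  shows "gauss_sum n psi m = 0"
proof -
  have m: "m > 0" using dchar_pos[OF d] .
  define F where "F k = psi k * ex m (k * n)" for k
  have per: "F (k mod m) = F k" for k unfolding F_def using gper[OF d] .
  have "psi c * gauss_sum n psi m = (\<Sum>k<m. psi c * (psi k * ex m (k * n)))"
    unfolding gauss_lt[OF d] by (simp add: sum_distrib_left)
  also have "\<dots> = (\<Sum>k<m. F (c * k))"
  proof (rule sum.cong[OF refl])
    fix k
    have "ex m (c * k * n) = ex m (k * n)" using ex_cong[OF m cg] .
    then show "psi c * (psi k * ex m (k * n)) = F (c * k)"
      unfolding F_def by (simp add: dchar_mult[OF d] mult.assoc)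
  qed
  also have "\<dots> = (\<Sum>k<m. F k)" by (rule sum_perm[OF m c]) (rule per)
  also have "\<dots> = gauss_sum n psi m" unfolding gauss_lt[OF d] F_def by simp
  finally have "(psi c - 1) * gauss_sum n psi m = 0" by (simp add: algebra_simps)
  then show ?thesis using pc by simp
qed

lemma gauss_primitive: assumes pr: "primitive m psi"
  shows "gauss_sum n psi m = cnj (psi n) * gauss_sum 1 psi m"
proof (cases "coprime n m")
  case True
  then show ?thesis using gauss_coprime pr unfolding primitive_def by blast
next
  case False
  have d: "dchar m psi" using pr unfolding primitive_def by blast
  have m: "m > 0" using dchar_pos[OF d] .
  have pn: "psi n = 0" using dchar_nz[OF d] False by blast
  define g where "g = gcd n m"
  define q1 where "q1 = m div g"
  have g1: "g > 1" using False m unfolding g_def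
    by (metis coprime_iff_gcd_eq_1 gcd_pos_nat less_one nat_neq_iff)
  have gdvd: "g dvd m" "g dvd n" unfolding g_def by auto
  have mq: "m = q1 * g" unfolding q1_def using gdvd by simp
  have q1d: "q1 dvd m" using mq by simp
  have q1ne: "q1 \<noteq> m" using mq g1 m by (metis less_not_refl2 mult.right_neutral mult_cancel_left nat_neq_iff)
  have noind: "\<not> (\<exists>phi. induces phi q1 psi m)" using pr q1d q1ne unfolding primitive_def by blast
  obtain x y where xy: "coprime x m" "coprime y m" "[x = y] (mod q1)" "psi x \<noteq> psi y"
    using induced_exists[OF d q1d] noind by blast
  obtain y' where y': "[y * y' = Suc 0] (mod m)" using cong_solve_coprime_nat[OF xy(2)] by blast
  have "coprime (y * y') m" using cong_imp_coprime[OF cong_sym[OF y']] by simp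
  then have cy': "coprime y' m" by simp
  define c where "c = x * y'"
  have cc: "coprime c m" unfolding c_def using xy(1) cy' by simp
  have "[x * y' = y * y'] (mod q1)" using xy(3) by (simp add: cong_mult)
  moreover have "[y * y' = 1] (mod q1)" using cong_dvd_modulus_nat[OF y' q1d] by simp
  ultimately have c1: "[c = 1] (mod q1)" unfolding c_def by (rule cong_trans)
  have p1: "psi y * psi y' = 1" using dchar_cong[OF d y'] dchar_mult[OF d] dchar_one[OF d] by simp
  have "psi y' \<noteq> 0" using dchar_nz[OF d] cy' by blast
  then have pc: "psi c \<noteq> 1" unfolding c_def using xy(4) p1 dchar_mult[OF d]
    by (metis mult_cancel_right)
  have c0: "c \<noteq> 0"
  proof
    assume "c = 0"
    then have "m = 1" using cc by simp
    then show False using g1 gdvd by simp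
  qed
  obtain u where u: "c - 1 = q1 * u" using cong_to_1_nat[OF c1] by (auto elim: dvdE)
  obtain v where v: "n = g * v" using gdvd by (auto elim: dvdE)
  have cg: "[c * k * n = k * n] (mod m)" for k
  proof -
    have "c * k * n = k * n + (c - 1) * k * n" using c0
      by (metis add.commute add_mult_distrib le_add_diff_inverse2 less_one linorder_not_less mult_1)
    also have "\<dots> = k * n + m * (u * k * v)" unfolding u mq v by (simp add: algebra_simps)
    finally show ?thesis by (simp add: cong_def)
  qed
  have "gauss_sum n psi m = 0" using gauss_vanish[OF d cc pc cg] .
  then show ?thesis using pn by simp
qed


lemma ex_0: "ex m 0 = 1" unfolding ex_def by simp

lemma geom_ex: assumes s: "s > 0"
  shows "(\<Sum>t<s. ex s (t * n)) = (if s dvd n then of_nat s else 0)"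
proof -
  have "(\<Sum>t<s. ex s (t * n)) = (\<Sum>t<s. ex s n ^ t)" by (simp add: ex_power mult.commute)
  also have "\<dots> = (if s dvd n then of_nat s else 0)"
  proof (cases "s dvd n")
    case True
    then have "ex s n = 1" using ex_eq1[OF s] by simp
    then show ?thesis using True by simp
  next
    case False
    then have ne: "ex s n \<noteq> 1" using ex_eq1[OF s] by simp
    have "ex s n ^ s = 1" using ex_mult_m[OF s, of n] by (simp add: ex_power mult.commute)
    then show ?thesis using geometric_sum[OF ne, of s] False by simp
  qed
  finally show ?thesis .
qed

lemma B0: assumes d: "dchar q0 psi" and s: "s > 0"
  shows "(\<Sum>j=1..q0 * s. psi j * ex (q0 * s) (j * n)) =
     (if s dvd n then of_nat s * gauss_sum (n div s) psi q0 else 0)"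
proof -
  have q0: "q0 > 0" using dchar_pos[OF d] .
  define N where "N = q0 * s"
  have N: "N > 0" unfolding N_def using q0 s by simp
  define f where "f j = psi j * ex N (j * n)" for j
  have "psi N = psi 0" using dchar_mod[OF d, of N] unfolding N_def by simp
  then have fN: "f N = f 0" unfolding f_def using ex_mult_m[OF N] ex_0 by simp
  have "(\<Sum>j=1..N. f j) = (\<Sum>j<N. f j)" using sum_shift_period[OF fN] .
  also have "\<dots> = (\<Sum>t<s. \<Sum>a<q0. f (q0 * t + a))" unfolding N_def by (rule sum_group)
  also have "\<dots> = (\<Sum>t<s. \<Sum>a<q0. (psi a * ex N (a * n)) * ex s (t * n))"
  proof (intro sum.cong refl)
    fix t a
    have "psi (q0 * t + a) = psi a" using dchar_add_mult[OF d, of a t] by (simp add: mult.commute add.commute)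
    moreover have "ex N ((q0 * t + a) * n) = ex N (a * n) * ex s (t * n)"
      unfolding N_def using ex_scale[OF q0, of s "t * n"] ex_add
      by (simp add: algebra_simps)
    ultimately show "f (q0 * t + a) = (psi a * ex N (a * n)) * ex s (t * n)"
      unfolding f_def by simp
  qed
  also have "\<dots> = (\<Sum>a<q0. psi a * ex N (a * n)) * (\<Sum>t<s. ex s (t * n))"
    by (subst sum.swap) (simp add: sum_product)
  also have "\<dots> = (if s dvd n then of_nat s * gauss_sum (n div s) psi q0 else 0)"
  proof (cases "s dvd n")
    case True
    then obtain n' where n': "n = s * n'" by (auto elim: dvdE)
    have "(\<Sum>a<q0. psi a * ex N (a * n)) = (\<Sum>a<q0. psi a * ex q0 (a * n'))"
    proof (intro sum.cong refl)
      fix a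
      have "ex (s * q0) (s * (a * n')) = ex q0 (a * n')" using ex_scale[OF s] .
      then show "psi a * ex N (a * n) = psi a * ex q0 (a * n')"
        unfolding N_def n' by (simp add: mult.commute mult.left_commute)
    qed
    also have "\<dots> = gauss_sum n' psi q0" using gauss_lt[OF d] by simp
    finally show ?thesis using True geom_ex[OF s, of n] n' s by simp
  next
    case False then show ?thesis using geom_ex[OF s, of n] by simp
  qed
  finally show ?thesis unfolding N_def f_def .
qed

lemma chi_moebius:
  assumes ind: "induces psi q0 chi q"
  shows "chi k = psi k * (\<Sum>e | e dvd (q div q0) \<and> e dvd k. of_int (moebius e))"
proof -
  have dq: "dchar q0 psi" "dchar q chi" "q0 dvd q" and ch: "\<And>n. chi n = psi n * principal_char q n"
    using ind unfolding induces_def by auto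
  define r where "r = q div q0"
  have qr: "q = q0 * r" unfolding r_def using dq(3) by simp
  have rp: "r > 0" using qr dchar_pos[OF dq(2)] by (metis gr0I mult_0_right less_irrefl)
  have set: "{e. e dvd r \<and> e dvd k} = {e. e dvd gcd k r}" by auto
  have gp: "gcd k r > 0" using rp by simp
  have ms: "(\<Sum>e | e dvd r \<and> e dvd k. (of_int (moebius e) :: complex)) = (if coprime k r then 1 else 0)"
    unfolding set using msum[OF gp] by (simp add: coprime_iff_gcd_eq_1)
  show ?thesis
  proof (cases "psi k = 0")
    case True then show ?thesis using ch by simp
  next
    case False
    then have "coprime k q0" using dchar_nz[OF dq(1)] by blast
    then have "coprime k q \<longleftrightarrow> coprime k r" unfolding qr by simp
    then show ?thesis using ch ms unfolding r_def principal_char_def by simp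
  qed
qed

lemma B1:
  assumes ind: "induces psi q0 chi q"
  shows "gauss_sum n chi q = (\<Sum>e | e dvd (q div q0).
      of_int (moebius e) * psi e * (\<Sum>j=1..q div e. psi j * ex (q div e) (j * n)))"
proof -
  have dq: "dchar q0 psi" "dchar q chi" "q0 dvd q"
    using ind unfolding induces_def by auto
  define r where "r = q div q0"
  have qr: "q = q0 * r" unfolding r_def using dq(3) by simp
  have rp: "r > 0" using qr dchar_pos[OF dq(2)] by (metis gr0I mult_0_right less_irrefl)
  define D where "D = {e. e dvd r}"
  have fD: "finite D" unfolding D_def using rp by simp
  have "gauss_sum n chi q = (\<Sum>k\<in>{1..q}. \<Sum>e\<in>{e \<in> D. e dvd k}. of_int (moebius e) * (psi k * ex q (k * n)))"
    unfolding gauss_ex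
  proof (rule sum.cong[OF refl])
    fix k
    have S: "{e \<in> D. e dvd k} = {e. e dvd q div q0 \<and> e dvd k}" unfolding D_def r_def by auto
    have "chi k * ex q (k * n) = (\<Sum>e\<in>{e \<in> D. e dvd k}. of_int (moebius e)) * (psi k * ex q (k * n))"
      unfolding chi_moebius[OF ind] S by (simp only: mult.commute mult.left_commute mult.assoc)
    then show "chi k * ex q (k * n) = (\<Sum>e\<in>{e \<in> D. e dvd k}. of_int (moebius e) * (psi k * ex q (k * n)))"
      by (simp add: sum_distrib_right)
  qed
  also have "\<dots> = (\<Sum>e\<in>D. \<Sum>k\<in>{k \<in> {1..q}. e dvd k}. of_int (moebius e) * (psi k * ex q (k * n)))"
    by (rule sum.swap_restrict[OF finite_atLeastAtMost fD])
  also have "\<dots> = (\<Sum>e\<in>D. of_int (moebius e) * psi e * (\<Sum>j=1..q div e. psi j * ex (q div e) (j * n)))"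
  proof (rule sum.cong[OF refl])
    fix e assume "e \<in> D"
    then have er: "e dvd r" unfolding D_def by simp
    then have ep: "e > 0" using rp by (metis dvd_0_left_iff gr0I less_irrefl)
    have eq: "e dvd q" using er qr by simp
    have "(\<Sum>k\<in>{k \<in> {1..q}. e dvd k}. of_int (moebius e) * (psi k * ex q (k * n)))
        = (\<Sum>j\<in>{1..q div e}. of_int (moebius e) * (psi (e * j) * ex q (e * j * n)))"
    proof (rule sum.reindex_bij_witness[of _ "\<lambda>j. e * j" "\<lambda>k. k div e"])
      fix k assume "k \<in> {k \<in> {1..q}. e dvd k}"
      then show "e * (k div e) = k" by auto
    next
      fix k assume k: "k \<in> {k \<in> {1..q}. e dvd k}"
      from k obtain j where j: "k = e * j" by auto
      have "j \<ge> 1" using k j by (cases j) auto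
      then have "k div e \<ge> 1" using j ep by simp
      moreover have "k div e \<le> q div e" using k by (simp add: div_le_mono)
      ultimately show "k div e \<in> {1..q div e}" by simp
    next
      fix j assume "j \<in> {1..q div e}"
      then show "e * j div e = j" using ep by simp
    next
      fix j assume j: "j \<in> {1..q div e}"
      then have "e * j \<le> e * (q div e)" by simp
      then have "e * j \<le> q" using eq by simp
      moreover have "e * j \<ge> 1" using j ep by simp
      ultimately show "e * j \<in> {k \<in> {1..q}. e dvd k}" by simp
    next
      fix k assume "k \<in> {k \<in> {1..q}. e dvd k}"
      then show "of_int (moebius e) * (psi (e * (k div e)) * ex q (e * (k div e) * n)) =
          of_int (moebius e) * (psi k * ex q (k * n))" by auto
    qed
    also have "\<dots> = (\<Sum>j\<in>{1..q div e}. of_int (moebius e) * psi e * (psi j * ex (q div e) (j * n)))"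
    proof (rule sum.cong[OF refl])
      fix j
      have "ex q (e * j * n) = ex (e * (q div e)) (e * (j * n))" using eq by (simp add: mult.assoc)
      also have "\<dots> = ex (q div e) (j * n)" using ex_scale[OF ep] .
      finally show "of_int (moebius e) * (psi (e * j) * ex q (e * j * n)) =
          of_int (moebius e) * psi e * (psi j * ex (q div e) (j * n))"
        using dchar_mult[OF dq(1)] by simp
    qed
    finally show "(\<Sum>k\<in>{k \<in> {1..q}. e dvd k}. of_int (moebius e) * (psi k * ex q (k * n))) =
        of_int (moebius e) * psi e * (\<Sum>j=1..q div e. psi j * ex (q div e) (j * n))"
      by (simp add: sum_distrib_left)
  qed
  finally show ?thesis unfolding D_def r_def .
qed


lemma Bfull:
  assumes ind: "induces psi q0 chi q" and pr: "primitive q0 psi"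
  shows "gauss_sum n chi q = (\<Sum>e | e dvd (q div q0).
      of_int (moebius e) * psi e * (if (q div q0) div e dvd n then
        of_nat ((q div q0) div e) * (cnj (psi (n div ((q div q0) div e))) * gauss_sum 1 psi q0) else 0))"
proof -
  have dq: "dchar q0 psi" "dchar q chi" "q0 dvd q"
    using ind unfolding induces_def by auto
  define r where "r = q div q0"
  have qr: "q = q0 * r" unfolding r_def using dq(3) by simp
  have rp: "r > 0" using qr dchar_pos[OF dq(2)] by (metis gr0I mult_0_right less_irrefl)
  show ?thesis unfolding B1[OF ind] r_def[symmetric]
  proof (rule sum.cong[OF refl])
    fix e assume "e \<in> {e. e dvd r}"
    then have er: "e dvd r" by simp
    then have ep: "e > 0" using rp by (metis dvd_0_left_iff gr0I less_irrefl)
    have sp: "r div e > 0" using er rp by (metis dvd_div_eq_0_iff gr0I less_irrefl)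
    have qe: "q div e = q0 * (r div e)" unfolding qr using er by (simp add: div_mult_swap)
    show "of_int (moebius e) * psi e * (\<Sum>j = 1..q div e. psi j * ex (q div e) (j * n)) =
        of_int (moebius e) * psi e * (if r div e dvd n then
          of_nat (r div e) * (cnj (psi (n div (r div e))) * gauss_sum 1 psi q0) else 0)"
      unfolding qe B0[OF dq(1) sp] gauss_primitive[OF pr, of "n div (r div e)"] by simp
  qed
qed

lemma div_div_self: assumes "(d::nat) dvd m" "m > 0" shows "m div (m div d) = d"
proof -
  obtain k where k: "m = d * k" using assms by (auto elim: dvdE)
  then have "d > 0" "k > 0" using assms by auto
  then show ?thesis using k by simp
qed

lemma sum_div_reindex: assumes "(m::nat) > 0"
  shows "(\<Sum>d | d dvd m. f (m div d)) = (\<Sum>d | d dvd m. f d)"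
proof (rule sum.reindex_bij_witness[of _ "\<lambda>d. m div d" "\<lambda>d. m div d"])
  fix d assume "d \<in> {d. d dvd m}"
  then show "m div (m div d) = d" using assms div_div_self by simp
next
  fix d assume "d \<in> {d. d dvd m}"
  then show "m div d \<in> {d. d dvd m}" by (auto simp: div_dvd_iff_mult dvd_div_iff_mult)
qed (use assms div_div_self in auto)

lemma C1:
  assumes d: "dchar m psi" and n: "n > 0" and s: "s > 0"
  shows "(\<Sum>d | d dvd n. (if s dvd d then cnj (psi (d div s)) * of_int (moebius (n div d)) * cnj (psi (n div d)) else 0))
     = (if n = s then 1 else 0)"
proof (cases "s dvd n")
  case False
  then have "n \<noteq> s" by auto
  moreover have "\<forall>d\<in>{d. d dvd n}. \<not> s dvd d" using False dvd_trans by blast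
  ultimately show ?thesis by simp
next
  case True
  then obtain m' where m': "n = s * m'" by (auto elim: dvdE)
  have mp: "m' > 0" using m' n by (metis gr0I mult_0_right less_irrefl)
  have "(\<Sum>d | d dvd n. (if s dvd d then cnj (psi (d div s)) * of_int (moebius (n div d)) * cnj (psi (n div d)) else 0))
      = (\<Sum>d \<in> {d. d dvd n \<and> s dvd d}. cnj (psi (d div s)) * of_int (moebius (n div d)) * cnj (psi (n div d)))"
    using n by (simp add: sum.inter_filter[symmetric] conj_commute)
  also have "\<dots> = (\<Sum>d' | d' dvd m'. cnj (psi d') * of_int (moebius (m' div d')) * cnj (psi (m' div d')))"
  proof (rule sum.reindex_bij_witness[of _ "\<lambda>d'. s * d'" "\<lambda>d. d div s"])
    fix d assume "d \<in> {d. d dvd n \<and> s dvd d}"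
    then show "s * (d div s) = d" by simp
  next
    fix d assume "d \<in> {d. d dvd n \<and> s dvd d}"
    then show "d div s \<in> {d'. d' dvd m'}" using m' s by (auto elim!: dvdE)
  next
    fix d' assume "d' \<in> {d'. d' dvd m'}"
    then show "s * d' div s = d'" using s by simp
  next
    fix d' assume "d' \<in> {d'. d' dvd m'}"
    then show "s * d' \<in> {d. d dvd n \<and> s dvd d}" using m' by auto
  next
    fix d assume "d \<in> {d. d dvd n \<and> s dvd d}"
    then obtain d' where "d = s * d'" by (auto elim!: dvdE)
    then show "cnj (psi (d div s)) * of_int (moebius (m' div (d div s))) * cnj (psi (m' div (d div s))) =
         cnj (psi (d div s)) * of_int (moebius (n div d)) * cnj (psi (n div d))"
      using m' s by simp
  qed
  also have "\<dots> = (\<Sum>d' | d' dvd m'. cnj (psi m') * of_int (moebius (m' div d')))"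
  proof (rule sum.cong[OF refl])
    fix d' assume "d' \<in> {d'. d' dvd m'}"
    then have "d' * (m' div d') = m'" by simp
    then have "psi d' * psi (m' div d') = psi m'" using dchar_mult[OF d] by metis
    then show "cnj (psi d') * of_int (moebius (m' div d')) * cnj (psi (m' div d')) = cnj (psi m') * of_int (moebius (m' div d'))"
      by (metis complex_cnj_mult mult.commute mult.left_commute)
  qed
  also have "\<dots> = cnj (psi m') * (\<Sum>d' | d' dvd m'. of_int (moebius (m' div d')))"
    by (simp add: sum_distrib_left)
  also have "\<dots> = cnj (psi m') * (if m' = 1 then 1 else 0)"
  proof -
    have "(\<Sum>d' | d' dvd m'. (of_int (moebius (m' div d')) :: complex)) = (if m' = 1 then 1 else 0)"
      using sum_div_reindex[OF mp, of "\<lambda>x. of_int (moebius x) :: complex"] msum[OF mp, where 'a=complex] by simp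
    then show ?thesis by simp
  qed
  also have "\<dots> = (if n = s then 1 else 0)" using m' s dchar_one[OF d] by auto
  finally show ?thesis .
qed


lemma final_delta:
  fixes X :: "nat \<Rightarrow> complex"
  assumes r: "r > 0" and n: "n > 0"
  shows "(\<Sum>e | e dvd r. X e * (if n = r div e then 1 else 0)) = (if n dvd r then X (r div n) else 0)"
proof -
  have eq: "(n = r div e) \<longleftrightarrow> (e = r div n \<and> n dvd r)" if "e dvd r" for e
  proof
    assume a: "n = r div e"
    have "r = e * (r div e)" using that by simp
    then have "n dvd r" using a by (metis dvd_triv_right)
    moreover have "e = r div n" using a div_div_self[OF that r] by simp
    ultimately show "e = r div n \<and> n dvd r" by simp
  next
    assume "e = r div n \<and> n dvd r"
    then show "n = r div e" using div_div_self[of n r] r by simp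
  qed
  have "(\<Sum>e | e dvd r. X e * (if n = r div e then 1 else 0))
      = (\<Sum>e | e dvd r. if e = r div n then (if n dvd r then X e else 0) else 0)"
    by (rule sum.cong[OF refl]) (use eq in auto)
  also have "\<dots> = (if n dvd r then X (r div n) else 0)"
  proof (cases "n dvd r")
    case True
    have "r = n * (r div n)" using True by simp
    then have "r div n dvd r" by (metis dvd_triv_right)
    then show ?thesis using True r by (simp add: sum.delta)
  next
    case False then show ?thesis by (simp add: sum.neutral)
  qed
  finally show ?thesis .
qed

theorem lemma4p2:
  fixes chi psi :: "nat \<Rightarrow> complex" and q q0 n :: nat
  assumes "dchar q chi" and "primitive q0 psi" and "induces psi q0 chi q" and "n \<ge> 1"
  shows "(\<Sum>d | d dvd n. gauss_sum d chi q * of_int (moebius (n div d)) * cnj (psi (n div d))) =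
    (if n dvd (q div q0)
     then of_nat n * gauss_sum 1 psi q0 * of_int (moebius (q div (n * q0))) * psi (q div (n * q0))
     else 0)"
proof -
  note ind = assms(3) and pr = assms(2)
  have dq: "dchar q0 psi" "dchar q chi" "q0 dvd q"
    using ind unfolding induces_def by auto
  define r where "r = q div q0"
  have qr: "q = q0 * r" unfolding r_def using dq(3) by simp
  have rp: "r > 0" using qr dchar_pos[OF dq(2)] by (metis gr0I mult_0_right less_irrefl)
  have q0p: "q0 > 0" using dchar_pos[OF dq(1)] .
  have np: "n > 0" using assms(4) by simp
  define T where "T = gauss_sum 1 psi q0"
  define X where "X e = of_int (moebius e) * psi e * of_nat (r div e) * T" for e
  define Y where "Y e d = (if r div e dvd d then cnj (psi (d div (r div e))) * of_int (moebius (n div d)) * cnj (psi (n div d)) else 0)" for e d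
  have step1: "gauss_sum d chi q * of_int (moebius (n div d)) * cnj (psi (n div d)) = (\<Sum>e | e dvd r. X e * Y e d)" for d
    unfolding Bfull[OF ind pr] r_def[symmetric] sum_distrib_right
  proof (rule sum.cong[OF refl])
    fix e
    show "of_int (moebius e) * psi e * (if r div e dvd d then of_nat (r div e) * (cnj (psi (d div (r div e))) * gauss_sum 1 psi q0) else 0) *
        of_int (moebius (n div d)) * cnj (psi (n div d)) = X e * Y e d"
      unfolding X_def Y_def T_def by (simp add: ac_simps)
  qed
  have "(\<Sum>d | d dvd n. gauss_sum d chi q * of_int (moebius (n div d)) * cnj (psi (n div d)))
      = (\<Sum>d | d dvd n. \<Sum>e | e dvd r. X e * Y e d)" unfolding step1 ..
  also have "\<dots> = (\<Sum>e | e dvd r. \<Sum>d | d dvd n. X e * Y e d)" by (rule sum.swap)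
  also have "\<dots> = (\<Sum>e | e dvd r. X e * (if n = r div e then 1 else 0))"
  proof (rule sum.cong[OF refl])
    fix e assume "e \<in> {e. e dvd r}"
    then have sp: "r div e > 0" using rp by (metis dvd_div_eq_0_iff gr0I less_irrefl mem_Collect_eq)
    show "(\<Sum>d | d dvd n. X e * Y e d) = X e * (if n = r div e then 1 else 0)"
      unfolding sum_distrib_left[symmetric] Y_def using C1[OF dq(1) np sp] by simp
  qed
  also have "\<dots> = (if n dvd r then X (r div n) else 0)" by (rule final_delta[OF rp np])
  also have "\<dots> = (if n dvd (q div q0)
     then of_nat n * gauss_sum 1 psi q0 * of_int (moebius (q div (n * q0))) * psi (q div (n * q0))
     else 0)"
  proof (cases "n dvd r")
    case True
    have "r div (r div n) = n" using div_div_self[OF True rp] .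
    moreover have "q div (n * q0) = r div n" unfolding qr using q0p by (simp add: mult.commute)
    ultimately show ?thesis using True unfolding X_def T_def r_def[symmetric] by (simp add: ac_simps)
  next
    case False then show ?thesis unfolding r_def by simp
  qed
  finally show ?thesis .
qed

end
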